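(* Let $\alpha,\beta,\sigma>0$ and let $X\sim\mathcal{N}(\alpha,\sigma^2)$. Then $$\mathbb{E}\left[\tanh'\left(\frac{\beta X}{\sigma^2}\right) X\right]\ge 0,$$ where $\tanh'$ denotes the derivative of the hyperbolic tangent. *)

theory Defs
  imports "HOL-Probability.Probability"
begin

end

theory Submission
  imports Defs
begin

lemma deriv_tanh_eq: "deriv tanh (x::real) = 1 - tanh x ^ 2"
proof -
  have "cosh x \<noteq> 0" using cosh_real_pos[of x] by simp
  hence "(tanh has_field_derivative 1 - tanh x ^ 2) (at x)"
    by (auto intro!: derivative_eq_intros)
  thus ?thesis by (rule DERIV_imp_deriv)
qed

lemma tanh_sq_le: "tanh (x::real) ^ 2 \<le> 1"
proof -
  have "tanh x < 1" by (rule tanh_real_lt_1)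
  moreover have "-tanh x < 1" using tanh_real_lt_1[of "-x"] by simp
  ultimately have "\<bar>tanh x\<bar> \<le> 1" by linarith
  then show ?thesis by (simp add: abs_square_le_1)
qed

theorem lemma1:
  fixes M :: "'a measure" and X :: "'a \<Rightarrow> real"
    and \<alpha> \<beta> \<sigma> :: real
  assumes "prob_space M"
    and "\<alpha> > 0" and "\<beta> > 0" and "\<sigma> > 0"
    and "distributed M lborel X (normal_density \<alpha> \<sigma>)"
  shows "prob_space.expectation M (\<lambda>\<omega>. deriv tanh (\<beta> * X \<omega> / \<sigma>\<^sup>2) * X \<omega>) \<ge> 0"
proof -
  define g where "g = (\<lambda>y::real. deriv tanh (\<beta> * y / \<sigma>\<^sup>2) * y)"
  have g_eq: "g = (\<lambda>y. (1 - tanh (\<beta> * y / \<sigma>\<^sup>2) ^ 2) * y)"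
    unfolding g_def deriv_tanh_eq by simp
  have gm: "g \<in> borel_measurable lborel"
  proof -
    have "continuous_on UNIV (\<lambda>y. tanh (\<beta> * y / \<sigma>\<^sup>2))"
      by (intro continuous_intros) (use assms(4) in \<open>auto simp: cosh_real_pos[THEN less_imp_neq, symmetric]\<close>)
    hence "continuous_on UNIV g" unfolding g_eq
      by (intro continuous_on_mult continuous_on_diff continuous_on_const continuous_on_power continuous_on_id)
    thus ?thesis using borel_measurable_continuous_onI by simp
  qed
  define h where "h = (\<lambda>x. normal_density \<alpha> \<sigma> x * g x)"
  have E: "prob_space.expectation M (\<lambda>\<omega>. deriv tanh (\<beta> * X \<omega> / \<sigma>\<^sup>2) * X \<omega>) = integral\<^sup>L lborel h"
    unfolding h_def using distributed_integral[OF assms(5) gm] normal_density_nonneg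
    by (simp add: g_def)
  have refl: "integral\<^sup>L lborel h = integral\<^sup>L lborel (\<lambda>x. h (- x))"
    using lborel_integral_real_affine[of "-1" h 0] by simp
  have pw: "h x + h (-x) \<ge> 0" for x
  proof -
    have eq: "h x + h (-x) = (1 - tanh (\<beta> * x / \<sigma>\<^sup>2) ^ 2) * (x * (normal_density \<alpha> \<sigma> x - normal_density \<alpha> \<sigma> (-x)))"
      unfolding h_def g_eq by (simp add: algebra_simps)
    have A: "x * (normal_density \<alpha> \<sigma> x - normal_density \<alpha> \<sigma> (-x)) \<ge> 0"
    proof (cases "x \<ge> 0")
      case True
      have "(x - \<alpha>)\<^sup>2 \<le> (-x - \<alpha>)\<^sup>2" using True assms(2) by (simp add: power2_eq_square algebra_simps)
      hence "-(x - \<alpha>)\<^sup>2 / (2 * \<sigma>\<^sup>2) \<ge> -(-x - \<alpha>)\<^sup>2 / (2 * \<sigma>\<^sup>2)"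
        using assms(4) by (simp add: divide_right_mono)
      hence "normal_density \<alpha> \<sigma> x \<ge> normal_density \<alpha> \<sigma> (-x)"
        unfolding normal_density_def by (intro mult_left_mono) auto
      then show ?thesis using True by simp
    next
      case False
      have "(x - \<alpha>)\<^sup>2 \<ge> (-x - \<alpha>)\<^sup>2" using False assms(2) using mult_pos_neg[of \<alpha> x] by (simp add: power2_eq_square algebra_simps)
      hence "-(x - \<alpha>)\<^sup>2 / (2 * \<sigma>\<^sup>2) \<le> -(-x - \<alpha>)\<^sup>2 / (2 * \<sigma>\<^sup>2)"
        using assms(4) by (simp add: divide_right_mono)
      hence "normal_density \<alpha> \<sigma> x \<le> normal_density \<alpha> \<sigma> (-x)"
        unfolding normal_density_def by (intro mult_left_mono) auto
      then show ?thesis using False by (simp add: mult_nonpos_nonpos)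
    qed
    show ?thesis unfolding eq using A tanh_sq_le by simp
  qed
  show ?thesis
  proof (cases "integrable lborel h")
    case True
    have T2: "integrable lborel (\<lambda>x. h (- x))"
      using True lborel_integrable_real_affine[OF True, of "-1" 0] by simp
    have "2 * integral\<^sup>L lborel h = integral\<^sup>L lborel (\<lambda>x. h x + h (-x))"
      using refl Bochner_Integration.integral_add[OF True T2] by simp
    also have "\<dots> \<ge> 0" using pw by (intro integral_nonneg_AE) auto
    finally show ?thesis using E by simp
  next
    case False
    then show ?thesis using E by (simp add: not_integrable_integral_eq)
  qed
qed

end
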